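(* Let $n=2$ and let $M$ be a Griffiths positive $2\times 2$ matrix of constant coefficient $(1,1)$-forms on $\mathbb{C}^2$. Then $\Omega=\det(M)$ is a Lefschetz form for the bidegree $(0,0)$, i.e. $c\mapsto c\,\Omega$ is an isomorphism $\mathbb{C}=V^{0,0}\to V^{2,2}$ (equivalently $\Omega\neq 0$).
   Context: $V^{p,q}$ is the space of constant coefficient $(p,q)$-forms on $\mathbb{C}^n$. A $(1,1)$-form is Kähler if it equals $\sum_l\frac{\sqrt{-1}}{2}dw_l\wedge d\overline{w_l}$ in some complex linear coordinates. A matrix $M=(\alpha_{i,j})$ of $(1,1)$-forms with $\alpha_{i,j}=\overline{\alpha_{j,i}}$ is Griffiths positive if $\sum_{i,j}\theta_i\alpha_{i,j}\overline{\theta_j}$ is Kähler for all nonzero $\theta$. $\det(M)=\alpha_{1,1}\wedge\alpha_{2,2}-\alpha_{1,2}\wedge\alpha_{2,1}$. *)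

theory Defs
  imports "HOL-Analysis.Analysis"
begin

text \<open>Constant coefficient forms on C^2 with coordinates z1, z2 (indices of type 2).
  A (1,0)-form  sum_i u_i dz_i  is its coefficient vector u :: complex^2;
  a (0,1)-form  sum_j v_j d(conj z_j)  likewise.
  A (1,1)-form  sum_{i,j} a_ij dz_i /\ d(conj z_j)  is its coefficient matrix a :: complex^2^2.
  V^{2,2} is one-dimensional, spanned by dz1 /\ d(conj z1) /\ dz2 /\ d(conj z2);
  a (2,2)-form is identified with its coefficient in this basis (a complex number).\<close>

type_synonym form10 = "complex^2"
type_synonym form01 = "complex^2"
type_synonym form11 = "complex^2^2"
type_synonym form22 = complex

definition smult11 :: "complex \<Rightarrow> form11 \<Rightarrow> form11" where
  "smult11 c a = (\<chi> i j. c * a $ i $ j)"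

definition wedge10_01 :: "form10 \<Rightarrow> form01 \<Rightarrow> form11" where
  "wedge10_01 u v = (\<chi> i j. u $ i * v $ j)"

definition conj10 :: "form10 \<Rightarrow> form01" where
  "conj10 u = (\<chi> j. cnj (u $ j))"

text \<open>complex conjugate of a (1,1)-form:
  conj(a_ij dz_i /\ d(conj z_j)) = conj(a_ij) d(conj z_i) /\ dz_j = - conj(a_ij) dz_j /\ d(conj z_i)\<close>
definition conj11 :: "form11 \<Rightarrow> form11" where
  "conj11 a = (\<chi> p q. - cnj (a $ q $ p))"

text \<open>wedge of two (1,1)-forms, expressed in the basis dz1 /\ d(conj z1) /\ dz2 /\ d(conj z2)
  (this is the literal expansion of the exterior product with the sign rules)\<close>
definition wedge11 :: "form11 \<Rightarrow> form11 \<Rightarrow> form22" where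
  "wedge11 a b =
     a$1$1 * b$2$2 + a$2$2 * b$1$1 - a$1$2 * b$2$1 - a$2$1 * b$1$2"

text \<open>Kaehler: equals sum_l (sqrt(-1)/2) dw_l /\ d(conj w_l) for complex linear coordinates
  w_l = sum_i W_li z_i, i.e. dw_l = row l of an invertible matrix W.\<close>
definition kahler :: "form11 \<Rightarrow> bool" where
  "kahler \<alpha> \<longleftrightarrow> (\<exists>W :: complex^2^2. invertible W \<and>
      \<alpha> = (\<Sum>l\<in>UNIV. smult11 (\<i> / 2) (wedge10_01 (W $ l) (conj10 (W $ l)))))"

definition griffiths_positive :: "form11^2^2 \<Rightarrow> bool" where
  "griffiths_positive M \<longleftrightarrow>
     (\<forall>i j. M $ i $ j = conj11 (M $ j $ i)) \<and>
     (\<forall>\<theta> :: complex^2. \<theta> \<noteq> 0 \<longrightarrow>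
        kahler (\<Sum>i\<in>UNIV. \<Sum>j\<in>UNIV. smult11 (\<theta> $ i * cnj (\<theta> $ j)) (M $ i $ j)))"

definition det_form :: "form11^2^2 \<Rightarrow> form22" where
  "det_form M = wedge11 (M$1$1) (M$2$2) - wedge11 (M$1$2) (M$2$1)"

end

theory Submission
  imports Defs
begin


definition hf :: "form11 \<Rightarrow> complex^2 \<Rightarrow> complex" where
  "hf \<alpha> v = (\<Sum>p\<in>UNIV. \<Sum>q\<in>UNIV. v$p * \<alpha>$p$q * cnj (v$q))"

lemma kahler_pos:
  assumes "kahler \<alpha>" "v \<noteq> 0"
  shows "\<exists>t>0. hf \<alpha> v = \<i>/2 * complex_of_real t"
proof -
  obtain W :: "complex^2^2" where W: "invertible W"
    and a: "\<alpha> = (\<Sum>l\<in>UNIV. smult11 (\<i> / 2) (wedge10_01 (W $ l) (conj10 (W $ l))))"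
    using assms(1) unfolding kahler_def by blast
  define w where "w = W *v v"
  have wnz: "w \<noteq> 0"
  proof
    assume "w = 0"
    from W obtain W' where "W' ** W = mat 1" unfolding invertible_def by blast
    then have "v = W' *v w" unfolding w_def by (simp add: matrix_vector_mul_assoc)
    with \<open>w = 0\<close> assms(2) show False by simp
  qed
  have eq: "hf \<alpha> v = \<i>/2 * complex_of_real ((cmod (w$1))^2 + (cmod (w$2))^2)"
    unfolding hf_def a w_def
    unfolding of_real_add complex_norm_square
    by (simp add: sum_2 smult11_def wedge10_01_def conj10_def matrix_vector_mult_def
        algebra_simps)
  have "(cmod (w$1))^2 + (cmod (w$2))^2 > 0"
  proof (rule ccontr)
    assume "\<not> ?thesis"
    moreover have "(cmod (w$1))^2 \<ge> 0" "(cmod (w$2))^2 \<ge> 0" by simp_all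
    ultimately have "(cmod (w$1))^2 = 0" "(cmod (w$2))^2 = 0" by linarith+
    then have "w$1 = 0" "w$2 = 0" by simp_all
    then have "w = 0" by (simp add: vec_eq_iff forall_2)
    with wnz show False by simp
  qed
  with eq show ?thesis by blast
qed


definition Hf :: "(2\<Rightarrow>2\<Rightarrow>2\<Rightarrow>2\<Rightarrow>complex) \<Rightarrow> complex^2 \<Rightarrow> complex^2 \<Rightarrow> complex" where
  "Hf a \<theta> v = (\<Sum>i\<in>UNIV. \<Sum>j\<in>UNIV. \<Sum>p\<in>UNIV. \<Sum>q\<in>UNIV.
      \<theta>$i * cnj (\<theta>$j) * v$p * cnj (v$q) * a i j p q)"

definition tf :: "(2\<Rightarrow>2\<Rightarrow>complex) \<Rightarrow> complex^2 \<Rightarrow> complex^2 \<Rightarrow> complex" where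
  "tf X u w = (\<Sum>p\<in>UNIV. \<Sum>q\<in>UNIV. u$p * X p q * cnj (w$q))"

definition DD :: "(2\<Rightarrow>2\<Rightarrow>complex) \<Rightarrow> (2\<Rightarrow>2\<Rightarrow>complex) \<Rightarrow> complex" where
  "DD X Y = X 1 1 * Y 2 2 + X 2 2 * Y 1 1 - X 1 2 * Y 2 1 - X 2 1 * Y 1 2"

definition Qf :: "(2\<Rightarrow>2\<Rightarrow>2\<Rightarrow>2\<Rightarrow>complex) \<Rightarrow> complex" where
  "Qf a = DD (a 1 1) (a 2 2) - DD (a 1 2) (a 2 1)"

lemma Hf_G: "Hf a \<theta> v = (\<Sum>i\<in>UNIV. \<Sum>j\<in>UNIV. \<theta>$i * cnj (\<theta>$j) * tf (a i j) v v)"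
  unfolding Hf_def tf_def by (simp add: sum_2 algebra_simps)

lemma tf_herm:
  assumes "\<And>i j p q. a i j p q = cnj (a j i q p)"
  shows "tf (a j i) u w = cnj (tf (a i j) w u)"
  unfolding tf_def sum_2 by (simp add: assms[of j i] algebra_simps)

lemma DD_trans:
  fixes u1 u2 :: "complex^2"
  defines "d \<equiv> u1$1 * u2$2 - u2$1 * u1$2"
  shows "DD (\<lambda>k l. tf X (if k = 1 then u1 else u2) (if l = 1 then u1 else u2))
            (\<lambda>k l. tf Y (if k = 1 then u1 else u2) (if l = 1 then u1 else u2))
       = d * cnj d * DD X Y"
  unfolding DD_def tf_def d_def sum_2 by (simp add: algebra_simps)

lemma final_ineq:
  fixes p1 p2 r1 r2 :: real and b1 b2 c d :: complex
  assumes "p1 > 0" "p2 > 0" "r1 > 0" "r2 > 0"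
    "(cmod b1)^2 < p1 * r1" "(cmod b2)^2 < p2 * r2"
  shows "of_real p1 * of_real r2 + of_real p2 * of_real r1
          - (b1 * cnj b2 + b2 * cnj b1 - c * cnj c - d * cnj d) \<noteq> 0"
proof -
  have "Re (b1 * cnj b2) \<le> cmod (b1 * cnj b2)" by (rule complex_Re_le_cmod)
  also have "\<dots> = cmod b1 * cmod b2" by (simp add: norm_mult)
  finally have h1: "Re (b1 * cnj b2) \<le> cmod b1 * cmod b2" .
  have "(cmod b1 * cmod b2)^2 < (p1*r1)*(p2*r2)"
    unfolding power_mult_distrib
    by (rule mult_strict_mono') (use assms in auto)
  also have "\<dots> \<le> ((p1*r2 + p2*r1)/2)^2"
  proof -
    have "((p1*r2 + p2*r1)/2)^2 - (p1*r1)*(p2*r2) = ((p1*r2 - p2*r1)/2)^2"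
      by (simp add: power2_eq_square field_simps)
    moreover have "((p1*r2 - p2*r1)/2)^2 \<ge> 0" by simp
    ultimately show ?thesis by linarith
  qed
  finally have "cmod b1 * cmod b2 < (p1*r2 + p2*r1)/2"
    by (rule power2_less_imp_less) (use assms in auto)
  with h1 have h2: "2 * Re (b1 * cnj b2) < p1*r2 + p2*r1" by argo
  have "Re (b2 * cnj b1) = Re (b1 * cnj b2)" by simp
  moreover have "Re (c * cnj c) \<ge> 0" "Re (d * cnj d) \<ge> 0"
    by (simp_all add: complex_mult_cnj)
  moreover have "Re (of_real p1 * of_real r2 + of_real p2 * of_real r1
          - (b1 * cnj b2 + b2 * cnj b1 - c * cnj c - d * cnj d)) =
     p1*r2 + p2*r1 - Re (b1 * cnj b2) - Re (b2 * cnj b1) + Re (c * cnj c) + Re (d * cnj d)"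
    by (simp only: minus_complex.sel plus_complex.sel Re_complex_of_real of_real_mult[symmetric])
  ultimately have "Re (of_real p1 * of_real r2 + of_real p2 * of_real r1
          - (b1 * cnj b2 + b2 * cnj b1 - c * cnj c - d * cnj d)) > 0"
    using h2 by argo
  then show ?thesis by (metis order_less_irrefl zero_complex.sel(1))
qed



lemma Hf_e1: "Hf a (vector [1,0]) v = tf (a 1 1) v v"
  unfolding Hf_G by (simp add: sum_2)
lemma Hf_e2: "Hf a (vector [0,1]) v = tf (a 2 2) v v"
  unfolding Hf_G by (simp add: sum_2)

lemma vec2_nz: "(vector [x, y] :: complex^2) \<noteq> 0 \<longleftrightarrow> x \<noteq> 0 \<or> y \<noteq> 0"
  by (auto simp: vec_eq_iff forall_2)

lemma core:
  fixes a :: "2\<Rightarrow>2\<Rightarrow>2\<Rightarrow>2\<Rightarrow>complex"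
  assumes herm: "\<And>i j p q. a i j p q = cnj (a j i q p)"
    and pos: "\<And>\<theta> v. \<theta> \<noteq> 0 \<Longrightarrow> v \<noteq> 0 \<Longrightarrow> \<exists>t>0. Hf a \<theta> v = complex_of_real t"
  shows "Qf a \<noteq> 0"
proof -
  have e1nz: "(vector [1,0] :: complex^2) \<noteq> 0" and e2nz: "(vector [0,1] :: complex^2) \<noteq> 0"
    by (simp_all add: vec2_nz)
  have diag1: "\<exists>t>0. tf (a 1 1) v v = complex_of_real t" if "v \<noteq> 0" for v
    using pos[OF e1nz that] by (simp add: Hf_e1)
  have diag2: "\<exists>t>0. tf (a 2 2) v v = complex_of_real t" if "v \<noteq> 0" for v
    using pos[OF e2nz that] by (simp add: Hf_e2)
  have offd: "(cmod (tf (a 1 2) v v))^2 < p * r"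
    if v: "v \<noteq> 0" and p: "tf (a 1 1) v v = complex_of_real p"
      and r: "tf (a 2 2) v v = complex_of_real r" and rpos: "r > 0" for v p r
  proof -
    define g where "g = tf (a 1 2) v v"
    have g21: "tf (a 2 1) v v = cnj g" unfolding g_def by (rule tf_herm[OF herm])
    define \<theta> where "\<theta> = (vector [complex_of_real r, - g] :: complex^2)"
    have "\<theta> \<noteq> 0" unfolding \<theta>_def vec2_nz using rpos by simp
    then obtain t where t: "t > 0" "Hf a \<theta> v = complex_of_real t" using pos v by blast
    have "Hf a \<theta> v = complex_of_real r * (complex_of_real p * complex_of_real r - g * cnj g)"
      unfolding Hf_G \<theta>_def sum_2 using p r g21 unfolding g_def[symmetric]
      by (simp add: algebra_simps)
    also have "\<dots> = complex_of_real (r * (p * r - (cmod g)^2))"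
      by (simp add: complex_norm_square[symmetric])
    finally have "complex_of_real (r * (p * r - (cmod g)^2)) = complex_of_real t"
      using t(2) by (simp only:)
    then have "r * (p * r - (cmod g)^2) = t" by (simp only: of_real_eq_iff)
    with t rpos have "p * r - (cmod g)^2 > 0"
      by (metis zero_less_mult_pos)
    then show ?thesis unfolding g_def by simp
  qed
  define P11 where "P11 = a 1 1 1 1"
  define P12 where "P12 = a 1 1 1 2"
  define u1 where "u1 = (vector [1, 0] :: complex^2)"
  define u2 where "u2 = (vector [- cnj P12, P11] :: complex^2)"
  have tf11: "tf X u1 u1 = X 1 1" for X unfolding tf_def u1_def sum_2 by simp
  obtain p1 where p1: "p1 > 0" "tf (a 1 1) u1 u1 = complex_of_real p1"
    using diag1[OF e1nz] unfolding u1_def by blast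
  have P11r: "P11 = complex_of_real p1" using p1 tf11 unfolding P11_def by simp
  have u2nz: "u2 \<noteq> 0" unfolding u2_def vec2_nz P11r using p1 by simp
  obtain p2 where p2: "p2 > 0" "tf (a 1 1) u2 u2 = complex_of_real p2"
    using diag1[OF u2nz] by blast
  obtain r1 where r1: "r1 > 0" "tf (a 2 2) u1 u1 = complex_of_real r1"
    using diag2[OF e1nz] unfolding u1_def by blast
  obtain r2 where r2: "r2 > 0" "tf (a 2 2) u2 u2 = complex_of_real r2"
    using diag2[OF u2nz] by blast
  have b1: "(cmod (tf (a 1 2) u1 u1))^2 < p1 * r1"
    by (rule offd) (use p1 r1 e1nz u1_def in auto)
  have b2: "(cmod (tf (a 1 2) u2 u2))^2 < p2 * r2"
    by (rule offd) (use p2 r2 u2nz in auto)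
  have cP11: "cnj P11 = P11" using P11r by simp
  have a1121: "a 1 1 2 1 = cnj P12" unfolding P12_def by (subst herm) simp
  have x12: "tf (a 1 1) u1 u2 = 0"
    unfolding tf_def u1_def u2_def sum_2 using cP11 by (simp add: P11_def[symmetric] P12_def[symmetric])
  have x21: "tf (a 1 1) u2 u1 = 0"
    unfolding tf_def u1_def u2_def sum_2 using cP11 a1121
    by (simp add: P11_def[symmetric] P12_def[symmetric] algebra_simps)
  define U where "U = (\<lambda>k::2. if k = 1 then u1 else u2)"
  have U1: "U 1 = u1" and U2: "U 2 = u2" unfolding U_def by auto
  have d: "u1$1 * u2$2 - u2$1 * u1$2 = P11" unfolding u1_def u2_def by simp
  have T: "DD (\<lambda>k l. tf X (U k) (U l)) (\<lambda>k l. tf Y (U k) (U l)) = P11 * cnj P11 * DD X Y"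
    for X Y unfolding U_def using DD_trans[of X u1 u2 Y] d by simp
  have c21: "tf (a 2 1) u w = cnj (tf (a 1 2) w u)" for u w by (rule tf_herm[OF herm])
  have "Qf a * (P11 * cnj P11) =
     DD (\<lambda>k l. tf (a 1 1) (U k) (U l)) (\<lambda>k l. tf (a 2 2) (U k) (U l))
   - DD (\<lambda>k l. tf (a 1 2) (U k) (U l)) (\<lambda>k l. tf (a 2 1) (U k) (U l))"
    unfolding T Qf_def by (simp add: algebra_simps)
  also have "\<dots> = of_real p1 * of_real r2 + of_real p2 * of_real r1
      - (tf (a 1 2) u1 u1 * cnj (tf (a 1 2) u2 u2) + tf (a 1 2) u2 u2 * cnj (tf (a 1 2) u1 u1)
         - tf (a 1 2) u1 u2 * cnj (tf (a 1 2) u1 u2) - tf (a 1 2) u2 u1 * cnj (tf (a 1 2) u2 u1))"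
    using p1 p2 r1 r2 x12 x21
    by (simp add: DD_def U1 U2 c21 algebra_simps)
  finally have "Qf a * (P11 * cnj P11) = \<dots>" .
  moreover have "\<dots> \<noteq> 0" by (rule final_ineq) (use p1 p2 r1 r2 b1 b2 in auto)
  ultimately show ?thesis by auto
qed



theorem mainTheorem5:
  fixes M :: "form11^2^2"
  assumes "griffiths_positive M"
  shows "bij (\<lambda>c::complex. c * det_form M)"
proof -
  define a where "a = (\<lambda>i j p q. - 2 * \<i> * M$i$j$p$q)"
  have hM: "M $ i $ j = conj11 (M $ j $ i)" for i j
    using assms unfolding griffiths_positive_def by blast
  have kM: "kahler (\<Sum>i\<in>UNIV. \<Sum>j\<in>UNIV. smult11 (\<theta> $ i * cnj (\<theta> $ j)) (M $ i $ j))"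
    if "\<theta> \<noteq> 0" for \<theta>
    using assms that unfolding griffiths_positive_def by blast
  have herm: "a i j p q = cnj (a j i q p)" for i j p q
  proof -
    have "M$i$j$p$q = - cnj (M$j$i$q$p)" by (subst hM) (simp add: conj11_def)
    then show ?thesis unfolding a_def by simp
  qed
  have pos: "\<exists>t>0. Hf a \<theta> v = complex_of_real t" if th: "\<theta> \<noteq> 0" and vv: "v \<noteq> 0" for \<theta> v
  proof -
    define \<alpha> where "\<alpha> = (\<Sum>i\<in>UNIV. \<Sum>j\<in>UNIV. smult11 (\<theta> $ i * cnj (\<theta> $ j)) (M $ i $ j))"
    obtain t where t: "t > 0" "hf \<alpha> v = \<i>/2 * complex_of_real t"
      using kahler_pos[OF kM[OF th] vv] unfolding \<alpha>_def[symmetric] by blast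
    have "Hf a \<theta> v = - 2 * \<i> * hf \<alpha> v"
      unfolding Hf_def hf_def \<alpha>_def a_def sum_2 by (simp add: smult11_def algebra_simps)
    also have "\<dots> = complex_of_real t" unfolding t(2) by (simp add: field_simps)
    finally show ?thesis using t(1) by blast
  qed
  have Q: "Qf a \<noteq> 0" by (rule core[OF herm pos])
  have "det_form M = - (1/4) * Qf a"
    unfolding det_form_def wedge11_def Qf_def DD_def a_def by (simp add: algebra_simps)
  with Q have d: "det_form M \<noteq> 0" by simp
  show ?thesis unfolding bij_def inj_on_def surj_def
  proof (intro conjI ballI impI allI)
    fix x y assume "x * det_form M = y * det_form M"
    with d show "x = y" by simp
  next
    fix y show "\<exists>x. y = x * det_form M" using d by (intro exI[of _ "y / det_form M"]) simp
  qed
qed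


end
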